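(* Let $H=(V,E)$ be a finite hypergraph and $A\subset E$. Let $V_1,\dots,V_N\subset V$ be the vertex sets of the connected components of $H|_A=(V_A,A)$, and for $k=1,\dots,N$ let $E_k=\{e\in A : e\subset V_k\}$. Define $$\mathcal{V}_k=\{\tilde V\subset V_k : \tilde V\neq\emptyset \text{ and } |\tilde V\cap e| \text{ is even for all } e\in E_k\},\qquad \mathcal{U}_k=\Big\{\prod_{v\in\tilde V}\Lambda_v : \tilde V\in\mathcal{V}_k\Big\},$$ $\mathcal{U}=\bigcup_{k=1}^N\mathcal{U}_k$ and $\mathcal{Q}=\{\Lambda_v : v\in V\setminus\bigcup_{k=1}^N V_k\}$. Then $\mathcal{O}_A=\mathcal{G}(\mathcal{U}\cup\mathcal{Q})$. Moreover, if $H$ is a graph, then $\mathcal{V}_k=\{V_k\}$ for all $k=1,\dots,N$.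
   Context: A hypergraph is $H=(V,E)$ with $V$ finite and $E\subset\mathcal{P}(V)$; it is a graph if every edge has exactly two elements. Fix enumerations $E=\{e_1,\dots,e_{|E|}\}$, $V=\{v_1,\dots,v_{|V|}\}$. For $w:E\to\mathbb{Z}_2$ the physical state is $|\psi_w\rangle=|w(e_1)\cdots w(e_{|E|})\rangle$ (qubits indexed by edges). $w$ is a parity weight if there is $f:V\to\mathbb{Z}_2$ with $\overline{w(e)}=\bigoplus_{v\in e}f(v)$ for all $e\in E$, where $\overline{p}=p\oplus1$; $\Pi$ is the set of $|\psi_w\rangle$ with $w$ a parity weight. For $v\in V$, the logical line operator $\Lambda_v:\Pi\to\Pi$ sends $|\psi_w\rangle$ to $|\psi_{w'}\rangle$ where $w'(e)=\overline{w(e)}$ if $v\in e$ and $w'(e)=w(e)$ otherwise. $\mathbb{\Lambda}=\{\Lambda_v : v\in V\}\cup\{\mathbb{1}\}$. For a set $F$ of maps $\Pi\to\Pi$, $\mathcal{G}(F)$ is the set of all finite compositions of elements of $F$, the empty composition being the identity $\mathbb{1}$. For $|\psi\rangle\in\Pi$ and non-empty $B\subset E$, $|\psi\rangle_B$ denotes the restriction to the qubits indexed by $B$. $\mathcal{O}_B=\{P\in\mathcal{G}(\mathbb{\Lambda}) : (P|\psi\rangle)_B=|\psi\rangle_B\ \forall|\psi\rangle\in\Pi\}$ for non-empty $B$, and $\mathcal{O}_\emptyset=\mathcal{G}(\mathbb{\Lambda})$. $H|_A=(V_A,A)$ with $V_A=\bigcup_{e\in A}e$; its connected components are with respect to edges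 in $A$. *)

theory Defs
  imports Main
begin

text \<open>A state |psi_w> is identified with its weight w : E -> Z2, encoded as a
function on edges (bool = Z2), with the convention w e = False for e \<notin> E.\<close>

type_synonym 'v state = "'v set \<Rightarrow> bool"
type_synonym 'v op = "'v state \<Rightarrow> 'v state"

definition hypergraph :: "'v set \<Rightarrow> 'v set set \<Rightarrow> bool" where
  "hypergraph V E \<longleftrightarrow> finite V \<and> E \<subseteq> Pow V"

definition is_graph :: "'v set set \<Rightarrow> bool" where
  "is_graph E \<longleftrightarrow> (\<forall>e\<in>E. card e = 2)"

definition parity_weight :: "'v set set \<Rightarrow> 'v state \<Rightarrow> bool" where
  "parity_weight E w \<longleftrightarrow>
     (\<exists>f :: 'v \<Rightarrow> bool. \<forall>e\<in>E. (\<not> w e) = odd (card {v\<in>e. f v}))"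

definition PiS :: "'v set set \<Rightarrow> 'v state set" where
  "PiS E = {w. (\<forall>e. e \<notin> E \<longrightarrow> w e = False) \<and> parity_weight E w}"

definition Lam :: "'v set set \<Rightarrow> 'v \<Rightarrow> 'v op" where
  "Lam E v w = (\<lambda>e. if e \<in> E \<and> v \<in> e then \<not> w e else w e)"

definition LamSet :: "'v set \<Rightarrow> 'v set set \<Rightarrow> 'v op set" where
  "LamSet V E = {Lam E v | v. v \<in> V} \<union> {id}"

inductive_set Gen :: "'v op set \<Rightarrow> 'v op set" for F :: "'v op set" where
  Gen_id: "id \<in> Gen F"
| Gen_comp: "f \<in> F \<Longrightarrow> g \<in> Gen F \<Longrightarrow> f \<circ> g \<in> Gen F"

definition Obs :: "'v set \<Rightarrow> 'v set set \<Rightarrow> 'v set set \<Rightarrow> 'v op set" where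
  "Obs V E B = (if B = {} then Gen (LamSet V E)
     else {P \<in> Gen (LamSet V E). \<forall>w\<in>PiS E. \<forall>e\<in>B. P w e = w e})"

definition LamProd :: "'v set set \<Rightarrow> 'v set \<Rightarrow> 'v op" where
  "LamProd E S = Finite_Set.fold (\<lambda>v g. Lam E v \<circ> g) id S"

definition adjA :: "'v set set \<Rightarrow> ('v \<times> 'v) set" where
  "adjA A = {(u, w). \<exists>e\<in>A. u \<in> e \<and> w \<in> e}"

definition components :: "'v set set \<Rightarrow> 'v set set" where
  "components A = (\<Union>A) // Restr ((adjA A)\<^sup>*) (\<Union>A)"

definition edgesIn :: "'v set set \<Rightarrow> 'v set \<Rightarrow> 'v set set" where
  "edgesIn A K = {e \<in> A. e \<subseteq> K}"

definition Vcal :: "'v set set \<Rightarrow> 'v set \<Rightarrow> 'v set set" where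
  "Vcal A K = {S. S \<subseteq> K \<and> S \<noteq> {} \<and> (\<forall>e\<in>edgesIn A K. even (card (S \<inter> e)))}"

definition Ucal :: "'v set set \<Rightarrow> 'v set set \<Rightarrow> 'v set \<Rightarrow> 'v op set" where
  "Ucal E A K = {LamProd E S | S. S \<in> Vcal A K}"

end

theory Submission
  imports Defs
begin

definition flp :: "'v set set \<Rightarrow> 'v set \<Rightarrow> 'v op" where
  "flp E S w = (\<lambda>e. if e \<in> E \<and> odd (card (S \<inter> e)) then \<not> w e else w e)"

lemma Lam_comm: "Lam E x \<circ> Lam E y = Lam E y \<circ> Lam E x"
  by (rule ext, rule ext) (auto simp: Lam_def)

lemma flp_empty: "flp E {} = id"
  by (rule ext, rule ext) (auto simp: flp_def)

lemma card_insert_int: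
  assumes "finite F" "x \<notin> F"
  shows "card (insert x F \<inter> e) = (if x \<in> e then Suc (card (F \<inter> e)) else card (F \<inter> e))"
  using assms by (auto simp: Int_insert_left)

lemma Lam_flp_insert:
  assumes "finite F" "x \<notin> F"
  shows "Lam E x \<circ> flp E F = flp E (insert x F)"
  using assms by (intro ext) (auto simp: Lam_def flp_def card_insert_int)

lemma LamProd_flp:
  assumes "finite S" shows "LamProd E S = flp E S"
proof -
  interpret comp_fun_commute "\<lambda>v g. Lam E v \<circ> g"
  proof
    fix y x
    show "(\<lambda>g. Lam E y \<circ> g) \<circ> (\<lambda>g. Lam E x \<circ> g) = (\<lambda>g. Lam E x \<circ> g) \<circ> (\<lambda>g. Lam E y \<circ> g)"
      by (rule ext) (metis Lam_comm comp_assoc comp_apply)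
  qed
  show ?thesis using assms
    by (induction S rule: finite_induct)
       (simp_all add: LamProd_def flp_empty Lam_flp_insert)
qed

lemma Lam_flp: "Lam E v = flp E {v}"
  using Lam_flp_insert[of "{}" v E] by (simp add: flp_empty)

lemma parity_symdiff:
  assumes "finite S" "finite T"
  shows "odd (card ((S - T \<union> (T - S)) \<inter> e)) = (odd (card (S \<inter> e)) \<noteq> odd (card (T \<inter> e)))"
proof -
  have 1: "card (S \<inter> e) = card ((S - T) \<inter> e) + card (S \<inter> T \<inter> e)"
    using assms by (subst card_Un_disjoint[symmetric]) (auto intro: arg_cong[where f=card])
  have 2: "card (T \<inter> e) = card ((T - S) \<inter> e) + card (S \<inter> T \<inter> e)"
    using assms by (subst card_Un_disjoint[symmetric]) (auto intro: arg_cong[where f=card])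
  have 3: "card ((S - T \<union> (T - S)) \<inter> e) = card ((S - T) \<inter> e) + card ((T - S) \<inter> e)"
    using assms by (subst card_Un_disjoint[symmetric]) (auto intro: arg_cong[where f=card])
  show ?thesis unfolding 1 2 3 by presburger
qed

lemma flp_comp:
  assumes "finite S" "finite T"
  shows "flp E S \<circ> flp E T = flp E (S - T \<union> (T - S))"
  using parity_symdiff[OF assms] by (intro ext) (auto simp: flp_def)

lemma Gen_gen: "f \<in> F \<Longrightarrow> f \<in> Gen F"
  using Gen_comp[OF _ Gen_id, of f F] by simp

lemma Gen_compose: "f \<in> Gen F \<Longrightarrow> g \<in> Gen F \<Longrightarrow> f \<circ> g \<in> Gen F"
  by (induction f rule: Gen.induct) (auto simp: o_assoc[symmetric] intro: Gen_comp)


lemma flp_insert_Gen: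
  assumes "finite S" "S \<subseteq> V" "\<And>v. v \<in> V \<Longrightarrow> Lam E v \<in> F"
  shows "flp E S \<in> Gen F"
  using assms
proof (induction S rule: finite_induct)
  case empty then show ?case unfolding flp_empty by (simp only: Gen.Gen_id)
next
  case (insert x S)
  then show ?case using Lam_flp_insert[of S x E] Gen_comp[of "Lam E x" F "flp E S"] by auto
qed

lemma Gen_LamSet:
  assumes "finite V"
  shows "Gen (LamSet V E) = {flp E S | S. S \<subseteq> V}"
proof
  show "Gen (LamSet V E) \<subseteq> {flp E S | S. S \<subseteq> V}"
  proof
    fix f assume "f \<in> Gen (LamSet V E)"
    then show "f \<in> {flp E S | S. S \<subseteq> V}"
    proof (induction f rule: Gen.induct)
      case Gen_id then show ?case using flp_empty by (metis (mono_tags, lifting) empty_subsetI mem_Collect_eq)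
    next
      case (Gen_comp f g)
      then obtain S where S: "S \<subseteq> V" "g = flp E S" by auto
      have fS: "finite S" using S assms finite_subset by auto
      from Gen_comp(1) consider "f = id" | v where "v \<in> V" "f = Lam E v" by (auto simp: LamSet_def)
      then show ?case
      proof cases
        case 1 then show ?thesis using S by auto
      next
        case 2
        then have "f \<circ> g = flp E ({v} - S \<union> (S - {v}))" using S fS by (simp add: Lam_flp flp_comp)
        moreover have "{v} - S \<union> (S - {v}) \<subseteq> V" using S 2 by auto
        ultimately show ?thesis by blast
      qed
    qed
  qed
next
  show "{flp E S | S. S \<subseteq> V} \<subseteq> Gen (LamSet V E)"
    using flp_insert_Gen[of _ V E "LamSet V E"] assms finite_subset
    by (auto simp: LamSet_def)
qed

definition Good :: "'v set \<Rightarrow> 'v set set \<Rightarrow> 'v set \<Rightarrow> bool" where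
  "Good V A S \<longleftrightarrow> S \<subseteq> V \<and> (\<forall>e\<in>A. even (card (S \<inter> e)))"

lemma w0_PiS: "(\<lambda>e. e \<in> E) \<in> PiS E"
proof -
  have "\<forall>e\<in>E. (\<not> (e \<in> E)) = odd (card {v\<in>e. (\<lambda>_. False) v})" by simp
  then have "parity_weight E (\<lambda>e. e \<in> E)" unfolding parity_weight_def by (intro exI[of _ "\<lambda>_. False"]) simp
  then show ?thesis unfolding PiS_def by simp
qed

lemma Obs_char:
  assumes "hypergraph V E" "A \<subseteq> E"
  shows "Obs V E A = {flp E S | S. Good V A S}"
proof -
  have fV: "finite V" using assms by (simp add: hypergraph_def)
  show ?thesis
  proof (cases "A = {}")
    case True then show ?thesis by (simp add: Obs_def Gen_LamSet[OF fV] Good_def)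
  next
    case False
    have "P \<in> {flp E S | S. Good V A S}" if "P \<in> Obs V E A" for P
    proof -
      from that False have P1: "P \<in> Gen (LamSet V E)" and inv: "\<forall>w\<in>PiS E. \<forall>e\<in>A. P w e = w e"
        unfolding Obs_def by simp_all
      from P1 obtain S where S: "S \<subseteq> V" "P = flp E S"
        unfolding Gen_LamSet[OF fV] by blast
      have "even (card (S \<inter> e))" if "e \<in> A" for e
        proof -
        have "P (\<lambda>e. e \<in> E) e = (e \<in> E)" using bspec[OF bspec[OF inv w0_PiS] that] by simp
        moreover have "e \<in> E" using that assms(2) by blast
        ultimately show ?thesis unfolding S(2) flp_def by (simp split: if_splits)
      qed
      then show ?thesis using S by (auto simp: Good_def)
    qed
    moreover have "P \<in> Obs V E A" if "P \<in> {flp E S | S. Good V A S}" for P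
    proof -
      from that obtain S where S: "Good V A S" "P = flp E S" by auto
      have "\<forall>w\<in>PiS E. \<forall>e\<in>A. P w e = w e" using S by (auto simp: Good_def flp_def)
      moreover have "P \<in> Gen (LamSet V E)" using S unfolding Gen_LamSet[OF fV] Good_def by blast
      ultimately show ?thesis using False unfolding Obs_def by simp
    qed
    ultimately show ?thesis by blast
  qed
qed


lemma comp_obtain:
  assumes "K \<in> components A"
  obtains x where "x \<in> \<Union>A" "K = {u. u \<in> \<Union>A \<and> (x, u) \<in> (adjA A)\<^sup>*}"
proof -
  from assms obtain x where x: "x \<in> \<Union>A" "K = Restr ((adjA A)\<^sup>*) (\<Union>A) `` {x}"
    unfolding components_def quotient_def by blast
  have "K = {u. u \<in> \<Union>A \<and> (x, u) \<in> (adjA A)\<^sup>*}" using x by blast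
  then show ?thesis using x that by blast
qed

lemma comp_sub: "K \<in> components A \<Longrightarrow> K \<subseteq> \<Union>A"
  by (erule comp_obtain) blast

lemma comp_edge:
  assumes "K \<in> components A" "e \<in> A" "y \<in> e" "y \<in> K"
  shows "e \<subseteq> K"
proof
  fix z assume z: "z \<in> e"
  obtain x where x: "x \<in> \<Union>A" "K = {u. u \<in> \<Union>A \<and> (x, u) \<in> (adjA A)\<^sup>*}"
    using assms(1) by (rule comp_obtain)
  have "(x, y) \<in> (adjA A)\<^sup>*" using assms(4) unfolding x(2) by simp
  moreover have "(y, z) \<in> adjA A" unfolding adjA_def using assms(2,3) z by blast
  ultimately have "(x, z) \<in> (adjA A)\<^sup>*" by (rule rtrancl_into_rtrancl)
  moreover have "z \<in> \<Union>A" using z assms(2) by blast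
  ultimately show "z \<in> K" unfolding x(2) by simp
qed

lemma comp_cover:
  assumes "v \<in> \<Union>A" shows "\<exists>K\<in>components A. v \<in> K"
proof (rule bexI)
  show "Restr ((adjA A)\<^sup>*) (\<Union>A) `` {v} \<in> components A"
    unfolding components_def using assms by (rule quotientI)
  have "(v, v) \<in> Restr ((adjA A)\<^sup>*) (\<Union>A)" using assms by simp
  then show "v \<in> Restr ((adjA A)\<^sup>*) (\<Union>A) `` {v}" by (rule ImageI) simp
qed

lemma Union_comp: "\<Union>(components A) = \<Union>A"
proof
  show "\<Union>(components A) \<subseteq> \<Union>A" using comp_sub[of _ A] by (simp add: Sup_le_iff)
  show "\<Union>A \<subseteq> \<Union>(components A)"
  proof
    fix v assume "v \<in> \<Union>A"
    from comp_cover[OF this] obtain K where "K \<in> components A" "v \<in> K" by blast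
    then show "v \<in> \<Union>(components A)" by (rule UnionI)
  qed
qed

lemma Good_symdiff:
  assumes "finite V" "Good V A S" "Good V A T"
  shows "Good V A (S - T \<union> (T - S))"
proof -
  have f: "finite S" "finite T" using assms finite_subset unfolding Good_def by blast+
  show ?thesis using assms(2,3) parity_symdiff[OF f] unfolding Good_def by blast
qed

lemma gen_good:
  assumes hg: "hypergraph V E" and AE: "A \<subseteq> E"
    and f: "f \<in> (\<Union>K\<in>components A. Ucal E A K) \<union> {Lam E v | v. v \<in> V - \<Union>(components A)}"
  shows "\<exists>T. Good V A T \<and> f = flp E T"
proof -
  have fV: "finite V" and EV: "E \<subseteq> Pow V" using hg by (auto simp: hypergraph_def)
  have AV: "\<Union>A \<subseteq> V" using AE EV by blast
  from f consider K where "K \<in> components A" "f \<in> Ucal E A K"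
    | v where "v \<in> V - \<Union>A" "f = Lam E v" using f unfolding Union_comp by auto
  then show ?thesis
  proof cases
    case 1
    then obtain T where T: "T \<in> Vcal A K" "f = LamProd E T" unfolding Ucal_def by auto
    have TK: "T \<subseteq> K" using T unfolding Vcal_def by simp
    have TV: "T \<subseteq> V" using TK comp_sub[OF 1(1)] AV by (meson order_trans)
    have fT: "finite T" using TV fV finite_subset by auto
    have "even (card (T \<inter> e))" if e: "e \<in> A" for e
    proof (cases "e \<subseteq> K")
      case True
      then have "e \<in> edgesIn A K" using e unfolding edgesIn_def by simp
      then show ?thesis using T unfolding Vcal_def by simp
    next
      case False
      have "T \<inter> e = {}"
      proof (rule ccontr)
        assume "T \<inter> e \<noteq> {}"
        then obtain y where "y \<in> T" "y \<in> e" by auto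
        then have "e \<subseteq> K" using comp_edge[OF 1(1) e] TK by auto
        then show False using False by simp
      qed
      then show ?thesis by simp
    qed
    then have "Good V A T" using TV unfolding Good_def by simp
    moreover have "f = flp E T" using T(2) LamProd_flp[OF fT] by simp
    ultimately show ?thesis by auto
  next
    case 2
    have "{v} \<inter> e = {}" if "e \<in> A" for e using 2 that by auto
    then have "Good V A {v}" using 2 unfolding Good_def by simp
    moreover have "f = flp E {v}" using 2 Lam_flp by simp
    ultimately show ?thesis by auto
  qed
qed


lemma RHS_sub:
  assumes hg: "hypergraph V E" and AE: "A \<subseteq> E"
  shows "Gen ((\<Union>K\<in>components A. Ucal E A K) \<union> {Lam E v | v. v \<in> V - \<Union>(components A)})
         \<subseteq> {flp E S | S. Good V A S}"
proof
  have fV: "finite V" using hg by (simp add: hypergraph_def)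
  fix f assume "f \<in> Gen ((\<Union>K\<in>components A. Ucal E A K) \<union> {Lam E v | v. v \<in> V - \<Union>(components A)})"
  then show "f \<in> {flp E S | S. Good V A S}"
  proof (induction f rule: Gen.induct)
    case Gen_id
    have "Good V A {}" unfolding Good_def by simp
    then show ?case using flp_empty by (metis (mono_tags, lifting) mem_Collect_eq)
  next
    case (Gen_comp f g)
    from gen_good[OF hg AE Gen_comp(1)] obtain T where T: "Good V A T" "f = flp E T" by auto
    from Gen_comp(3) obtain S where S: "Good V A S" "g = flp E S" by auto
    have fin: "finite T" "finite S" using T S fV finite_subset unfolding Good_def by auto
    have "f \<circ> g = flp E (T - S \<union> (S - T))" using T S flp_comp[OF fin] by simp
    moreover have "Good V A (T - S \<union> (S - T))" using Good_symdiff[OF fV T(1) S(1)] .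
    ultimately show ?case by auto
  qed
qed

lemma RHS_sup:
  assumes hg: "hypergraph V E" and AE: "A \<subseteq> E" and G: "Good V A S"
  shows "flp E S \<in> Gen ((\<Union>K\<in>components A. Ucal E A K) \<union> {Lam E v | v. v \<in> V - \<Union>(components A)})"
  using G
proof (induction "card S" arbitrary: S rule: less_induct)
  case less
  let ?F = "(\<Union>K\<in>components A. Ucal E A K) \<union> {Lam E v | v. v \<in> V - \<Union>(components A)}"
  have fV: "finite V" using hg by (simp add: hypergraph_def)
  have SV: "S \<subseteq> V" and ev: "\<And>e. e \<in> A \<Longrightarrow> even (card (S \<inter> e))" using less(2) unfolding Good_def by auto
  have fS: "finite S" using SV fV finite_subset by auto
  show ?case
  proof (cases "S = {}")
    case True
    then have "flp E S = id" using flp_empty by simp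
    then show ?thesis by (simp only: Gen.Gen_id)
  next
    case False
    then obtain v where v: "v \<in> S" by auto
    show ?thesis
    proof (cases "v \<in> \<Union>A")
      case False
      let ?S' = "S - {v}"
      have "?S' \<inter> e = S \<inter> e" if "e \<in> A" for e using False that by auto
      then have G': "Good V A ?S'" using SV ev unfolding Good_def by auto
      have c: "card ?S' < card S" using fS v by (metis card_Diff1_less)
      have IH: "flp E ?S' \<in> Gen ?F" using less(1)[OF c G'] .
      have "Lam E v \<in> ?F" using False v SV unfolding Union_comp by auto
      then have "Lam E v \<circ> flp E ?S' \<in> Gen ?F" using IH by (rule Gen_comp)
      moreover have "Lam E v \<circ> flp E ?S' = flp E S"
        using Lam_flp_insert[of ?S' v E] fS v by (simp add: insert_absorb)
      ultimately show ?thesis by simp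
    next
      case True
      from comp_cover[OF True] obtain K where K: "K \<in> components A" "v \<in> K" by auto
      let ?T = "S \<inter> K" and ?S' = "S - K"
      have "?T \<in> Vcal A K"
      proof -
        have "even (card (?T \<inter> e))" if "e \<in> edgesIn A K" for e
        proof -
          have "e \<in> A" "e \<subseteq> K" using that unfolding edgesIn_def by auto
          moreover have "?T \<inter> e = S \<inter> e" using \<open>e \<subseteq> K\<close> by auto
          ultimately show ?thesis using ev by simp
        qed
        moreover have "?T \<noteq> {}" using v K by auto
        ultimately show ?thesis unfolding Vcal_def by auto
      qed
      then have "LamProd E ?T \<in> Ucal E A K" unfolding Ucal_def by auto
      moreover have "LamProd E ?T = flp E ?T" using fS by (simp add: LamProd_flp)
      ultimately have Tin: "flp E ?T \<in> Gen ?F" using K(1) by (intro Gen_gen) auto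
      have "even (card (?S' \<inter> e))" if e: "e \<in> A" for e
      proof (cases "e \<inter> K = {}")
        case True
        then have "?S' \<inter> e = S \<inter> e" by auto
        then show ?thesis using ev e by simp
      next
        case False
        then obtain y where "y \<in> e" "y \<in> K" by auto
        then have "e \<subseteq> K" using comp_edge[OF K(1) e] by auto
        then have "?S' \<inter> e = {}" by auto
        then show ?thesis by simp
      qed
      then have G': "Good V A ?S'" using SV unfolding Good_def by auto
      have c: "card ?S' < card S" using fS v K by (intro psubset_card_mono) auto
      have IH: "flp E ?S' \<in> Gen ?F" using less(1)[OF c G'] .
      have fin: "finite ?T" "finite ?S'" using fS by auto
      have "flp E ?T \<circ> flp E ?S' = flp E (?T - ?S' \<union> (?S' - ?T))" by (rule flp_comp[OF fin])
      moreover have "?T - ?S' \<union> (?S' - ?T) = S" by auto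
      ultimately have "flp E S = flp E ?T \<circ> flp E ?S'" by simp
      then show ?thesis using Gen_compose[OF Tin IH] by simp
    qed
  qed
qed

lemma graph_part:
  assumes AE: "A \<subseteq> E" and g: "is_graph E" and K: "K \<in> components A"
  shows "Vcal A K = {K}"
proof -
  obtain x where x: "x \<in> \<Union>A" "K = {u. u \<in> \<Union>A \<and> (x, u) \<in> (adjA A)\<^sup>*}"
    using K by (rule comp_obtain)
  have xK: "x \<in> K" using x by simp
  have KV: "K \<in> Vcal A K"
  proof -
    have "even (card (K \<inter> e))" if "e \<in> edgesIn A K" for e
    proof -
      have "e \<in> E" "e \<subseteq> K" using that AE unfolding edgesIn_def by auto
      then have "K \<inter> e = e" "card e = 2" using g unfolding is_graph_def by auto
      then show ?thesis by simp
    qed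
    then show ?thesis using xK unfolding Vcal_def by auto
  qed
  have "S = K" if S: "S \<in> Vcal A K" for S
  proof -
    have SK: "S \<subseteq> K" and Sne: "S \<noteq> {}"
      and ev: "\<And>e. e \<in> edgesIn A K \<Longrightarrow> even (card (S \<inter> e))"
      using S unfolding Vcal_def by auto
    obtain s where s: "s \<in> S" using Sne by auto
    have reach: "y \<in> S" if "(s, y) \<in> (adjA A)\<^sup>*" for y
      using that
    proof (induction rule: rtrancl_induct)
      case base then show ?case using s .
    next
      case (step y z)
      from step(2) obtain e where e: "e \<in> A" "y \<in> e" "z \<in> e" unfolding adjA_def by auto
      have "y \<in> K" using step(3) SK by auto
      then have "e \<subseteq> K" using comp_edge[OF K e(1,2)] by simp
      then have eK: "e \<in> edgesIn A K" using e(1) unfolding edgesIn_def by simp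
      show ?case
      proof (rule ccontr)
        assume zS: "z \<notin> S"
        then have yz: "y \<noteq> z" using step(3) by auto
        have "card e = 2" using g e(1) AE unfolding is_graph_def by auto
        then obtain a b where ab: "e = {a, b}" "a \<noteq> b" by (auto simp: card_2_iff)
        then have "e = {y, z}" using e(2,3) yz by auto
        then have "S \<inter> e = {y}" using step(3) zS by auto
        then show False using ev[OF eK] by simp
      qed
    qed
    have "K \<subseteq> S"
    proof
      fix u assume "u \<in> K"
      then have xu: "(x, u) \<in> (adjA A)\<^sup>*" using x by simp
      have "(x, s) \<in> (adjA A)\<^sup>*" using s SK x by auto
      moreover have "sym ((adjA A)\<^sup>*)" by (rule sym_rtrancl) (auto simp: sym_def adjA_def)
      ultimately have "(s, x) \<in> (adjA A)\<^sup>*" by (rule symD[rotated])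
      then have "(s, u) \<in> (adjA A)\<^sup>*" using xu by (rule rtrancl_trans)
      then show "u \<in> S" by (rule reach)
    qed
    then show ?thesis using SK by auto
  qed
  then show ?thesis using KV by auto
qed

theorem lemma1:
  fixes V :: "'v set" and E A :: "'v set set"
  assumes "hypergraph V E" and "A \<subseteq> E"
  shows "Obs V E A = Gen ((\<Union>K\<in>components A. Ucal E A K)
                          \<union> {Lam E v | v. v \<in> V - \<Union>(components A)})
         \<and> (is_graph E \<longrightarrow> (\<forall>K\<in>components A. Vcal A K = {K}))"
proof
  show "Obs V E A = Gen ((\<Union>K\<in>components A. Ucal E A K)
                          \<union> {Lam E v | v. v \<in> V - \<Union>(components A)})"
    unfolding Obs_char[OF assms]
    using RHS_sub[OF assms] RHS_sup[OF assms] by auto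
  show "is_graph E \<longrightarrow> (\<forall>K\<in>components A. Vcal A K = {K})"
    using graph_part[OF assms(2)] by auto
qed

end
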